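(* Let $\rho:\Gamma\to GL_d(\mathbb{C})$ be an irreducible representation of dimension $d\le4$, and assume the eigenvalues of $\rho(T)$ (with multiplicity) are $\mathbf{e}(r_1),\dots,\mathbf{e}(r_d)$ for real numbers $r_1,\dots,r_d$. Then $12(r_1+\cdots+r_d)$ is an integer divisible by $d$.
   Context: $\Gamma=SL(2,\mathbb{Z})$, $T=\begin{pmatrix}1&1\\0&1\end{pmatrix}$, $\mathbf{e}(r)=e^{2\pi ir}$. *)

theory Defs
  imports Complex_Main "Jordan_Normal_Form.Char_Poly"
begin

definition SL2Z :: "int mat set" where
  "SL2Z = {A. A \<in> carrier_mat 2 2 \<and> det A = 1}"

definition T_mat :: "int mat" where
  "T_mat = mat_of_rows_list 2 [[1, 1], [0, 1]]"

definition e :: "real \<Rightarrow> complex" where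
  "e r = exp (2 * of_real pi * \<i> * of_real r)"

definition is_rep :: "nat \<Rightarrow> (int mat \<Rightarrow> complex mat) \<Rightarrow> bool" where
  "is_rep d \<rho> \<longleftrightarrow>
     (\<forall>A\<in>SL2Z. \<rho> A \<in> carrier_mat d d \<and> invertible_mat (\<rho> A)) \<and>
     (\<forall>A\<in>SL2Z. \<forall>B\<in>SL2Z. \<rho> (A * B) = \<rho> A * \<rho> B)"

definition is_subspace :: "nat \<Rightarrow> complex vec set \<Rightarrow> bool" where
  "is_subspace d W \<longleftrightarrow> W \<subseteq> carrier_vec d \<and> 0\<^sub>v d \<in> W \<and>
     (\<forall>v\<in>W. \<forall>w\<in>W. v + w \<in> W) \<and> (\<forall>c. \<forall>v\<in>W. c \<cdot>\<^sub>v v \<in> W)"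

definition irreducible_rep :: "nat \<Rightarrow> (int mat \<Rightarrow> complex mat) \<Rightarrow> bool" where
  "irreducible_rep d \<rho> \<longleftrightarrow> is_rep d \<rho> \<and> d > 0 \<and>
     (\<forall>W. is_subspace d W \<and> (\<forall>A\<in>SL2Z. \<forall>w\<in>W. \<rho> A *\<^sub>v w \<in> W)
          \<longrightarrow> W = {0\<^sub>v d} \<or> W = carrier_vec d)"

end

theory Submission
  imports Defs "Jordan_Normal_Form.Jordan_Normal_Form_Uniqueness" "Jordan_Normal_Form.Jordan_Normal_Form_Existence"
begin


definition m2 :: "'a::zero \<Rightarrow> 'a \<Rightarrow> 'a \<Rightarrow> 'a \<Rightarrow> 'a mat" where
  "m2 a b c d = mat 2 2 (\<lambda>(i,j). if i = 0 then (if j = 0 then a else b) else (if j = 0 then c else d))"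

lemma m2_carrier[simp]: "m2 a b c d \<in> carrier_mat 2 2"
  by (simp add: m2_def)

lemma m2_idx[simp]: "m2 a b c d $$ (0,0) = a" "m2 a b c d $$ (0,1) = b"
  "m2 a b c d $$ (1,0) = c" "m2 a b c d $$ (1,1) = d" "dim_row (m2 a b c d) = 2" "dim_col (m2 a b c d) = 2"
  by (simp_all add: m2_def)

lemma less2: "(i::nat) < 2 \<longleftrightarrow> i = 0 \<or> i = 1" by auto

lemma m2_eq_iff: "m2 a b c d = m2 a' b' c' d' \<longleftrightarrow> a = a' \<and> b = b' \<and> c = c' \<and> d = d'"
  by (metis m2_idx(1-4))

lemma m2_mult: "(m2 a b c d :: 'a::comm_ring_1 mat) * m2 a' b' c' d' =
   m2 (a*a'+b*c') (a*b'+b*d') (c*a'+d*c') (c*b'+d*d')"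
  by (rule eq_matI) (auto simp: m2_def scalar_prod_def less2 lessThan_nat_numeral atLeast0LessThan)

lemma m2_det: "det (m2 a b c d :: 'a::comm_ring_1 mat) = a*d - b*c"
  by (subst laplace_expansion_column[of _ 2 0])
     (auto simp: cofactor_def mat_delete_def lessThan_nat_numeral det_single m2_def)

lemma m2_of: "A \<in> carrier_mat 2 2 \<Longrightarrow> A = m2 (A$$(0,0)) (A$$(0,1)) (A$$(1,0)) (A$$(1,1))"
  by (rule eq_matI) (auto simp: m2_def less2)

lemma T_m2: "T_mat = m2 1 1 0 1"
  by (rule eq_matI) (auto simp: m2_def T_mat_def mat_of_rows_list_def less2)


lemma m2_SL2Z: "a*d - b*c = 1 \<Longrightarrow> (m2 a b c d :: int mat) \<in> SL2Z"
  by (simp add: SL2Z_def m2_det)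

lemma SL2Z_m2: "A \<in> SL2Z \<Longrightarrow> \<exists>a b c d. A = m2 a b c d \<and> a*d - b*c = 1"
proof -
  assume "A \<in> SL2Z"
  then have A: "A \<in> carrier_mat 2 2" "det A = 1" by (auto simp: SL2Z_def)
  have e: "A = m2 (A$$(0,0)) (A$$(0,1)) (A$$(1,0)) (A$$(1,1))" by (rule m2_of[OF A(1)])
  have "A$$(0,0) * A$$(1,1) - A$$(0,1) * A$$(1,0) = 1"
    using A(2) m2_det[of "A$$(0,0)" "A$$(0,1)" "A$$(1,0)" "A$$(1,1)"] e by simp
  with e show ?thesis by blast
qed

lemma SL2Z_mult: "A \<in> SL2Z \<Longrightarrow> B \<in> SL2Z \<Longrightarrow> A * B \<in> SL2Z"
  unfolding SL2Z_def by (auto simp: det_mult)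

lemma SL2Z_gen:
  fixes P :: "int mat \<Rightarrow> bool"
  assumes mult: "\<And>g h. g \<in> SL2Z \<Longrightarrow> h \<in> SL2Z \<Longrightarrow> P g \<Longrightarrow> P h \<Longrightarrow> P (g*h)"
    and PS: "P (m2 0 (-1) 1 0)" and PR: "P (m2 0 (-1) 1 1)"
    and A: "A \<in> SL2Z"
  shows "P A"
proof -
  have S2: "P (m2 (-1) 0 0 (-1))"
    using mult[OF m2_SL2Z m2_SL2Z PS PS] by (simp add: m2_mult)
  have S3: "P (m2 0 1 (-1) 0)"
    using mult[OF m2_SL2Z m2_SL2Z S2 PS] by (simp add: m2_mult)
  have I: "P (m2 1 0 0 1)"
    using mult[OF m2_SL2Z m2_SL2Z S2 S2] by (simp add: m2_mult)
  have T: "P (m2 1 1 0 1)"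
    using mult[OF m2_SL2Z m2_SL2Z S3 PR] by (simp add: m2_mult)
  have R2: "P (m2 (-1) (-1) 1 0)"
    using mult[OF m2_SL2Z m2_SL2Z PR PR] by (simp add: m2_mult)
  have R5: "P (m2 1 1 (-1) 0)"
    using mult[OF m2_SL2Z m2_SL2Z S2 R2] by (simp add: m2_mult)
  have Ti: "P (m2 1 (-1) 0 1)"
    using mult[OF m2_SL2Z m2_SL2Z R5 PS] by (simp add: m2_mult)
  have Tn: "P (m2 1 n 0 1)" for n :: int
  proof (induct n rule: int_induct[where k=0])
    case base then show ?case using I by simp
  next
    case (step1 i)
    then show ?case using mult[OF m2_SL2Z m2_SL2Z step1(2) T] by (simp add: m2_mult add.commute)
  next
    case (step2 i)
    then show ?case using mult[OF m2_SL2Z m2_SL2Z step2(2) Ti] by (simp add: m2_mult algebra_simps)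
  qed
  have Tn': "P (m2 (-1) n 0 (-1))" for n :: int
    using mult[OF m2_SL2Z m2_SL2Z S2 Tn[of "-n"]] by (simp add: m2_mult)
  have main: "a*d - b*c = 1 \<Longrightarrow> P (m2 a b c d)" for a b c d :: int
  proof (induct "nat \<bar>c\<bar>" arbitrary: a b c d rule: less_induct)
    case less
    show ?case
    proof (cases "c = 0")
      case True
      then have "a * d = 1" using less.prems by simp
      then have "(a = 1 \<and> d = 1) \<or> (a = -1 \<and> d = -1)" by (simp add: zmult_eq_1_iff)
      then show ?thesis using Tn Tn' True by auto
    next
      case False
      define q where "q = a div c"
      define r where "r = a mod c"
      have arq: "a = q*c + r" unfolding q_def r_def by simp
      have rlt: "\<bar>r\<bar> < \<bar>c\<bar>" unfolding r_def using False abs_mod_less by blast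
      have d1: "(-c)*(b - q*d) - (-d)*r = 1" using less.prems arq by (simp add: algebra_simps)
      have IH: "P (m2 (-c) (-d) r (b - q*d))"
        by (rule less.hyps[OF _ d1]) (use rlt in auto)
      have d2: "r * d - (b - q*d) * c = 1" using less.prems arq by (simp add: algebra_simps)
      have st: "P (m2 r (b - q*d) c d)"
        using mult[OF m2_SL2Z m2_SL2Z S3 IH] d1 by (simp add: m2_mult)
      have "P (m2 1 q 0 1 * m2 r (b - q*d) c d)"
        by (rule mult[OF m2_SL2Z m2_SL2Z Tn st]) (use d2 in auto)
      then show ?thesis using arq by (simp add: m2_mult algebra_simps)
    qed
  qed
  from SL2Z_m2[OF A] main show ?thesis by auto
qed


lemma kernel_indep:
  fixes M :: "'a::field mat"
  assumes M: "M \<in> carrier_mat n n"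
  shows "\<exists>U. finite U \<and> card U = kernel_dim M \<and> U \<subseteq> mat_kernel M \<and>
     \<not> module.lin_dep class_ring (module_vec TYPE('a) n) U"
proof -
  interpret K: kernel n n M by (unfold_locales, rule M)
  obtain U where U: "finite U" "K.Ker.basis U" using kernel_basis_exists[OF M] by blast
  have dim: "kernel_dim M = card U" using K.Ker.dim_basis[OF U] by simp
  have sub: "U \<subseteq> mat_kernel M" and li: "\<not> K.Ker.lin_dep U" using U(2) unfolding K.Ker.basis_def by auto
  have "\<not> K.NC.lin_dep U" using li K.lindep_same[OF sub] by simp
  then show ?thesis using U(1) dim sub by auto
qed


lemma kernel_inter:
  fixes M1 M2 :: "'a::field mat"
  assumes M1: "M1 \<in> carrier_mat n n" and M2: "M2 \<in> carrier_mat n n"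
    and gt: "kernel_dim M1 + kernel_dim M2 > n"
  shows "\<exists>v. v \<in> carrier_vec n \<and> v \<noteq> 0\<^sub>v n \<and> M1 *\<^sub>v v = 0\<^sub>v n \<and> M2 *\<^sub>v v = 0\<^sub>v n"
proof -
  interpret V: vec_space "TYPE('a)" n .
  interpret K1: kernel n n M1 by (unfold_locales, rule M1)
  interpret K2: kernel n n M2 by (unfold_locales, rule M2)
  obtain U1 where U1: "finite U1" "card U1 = kernel_dim M1" "U1 \<subseteq> mat_kernel M1" "\<not> V.lin_dep U1"
    using kernel_indep[OF M1] by blast
  obtain U2 where U2: "finite U2" "card U2 = kernel_dim M2" "U2 \<subseteq> mat_kernel M2" "\<not> V.lin_dep U2"
    using kernel_indep[OF M2] by blast
  have k1: "mat_kernel M1 \<subseteq> carrier_vec n" and k2: "mat_kernel M2 \<subseteq> carrier_vec n"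
    using mat_kernel_carrier[OF M1] mat_kernel_carrier[OF M2] by auto
  have good: "v \<in> mat_kernel M1 \<Longrightarrow> v \<in> mat_kernel M2 \<Longrightarrow> v \<noteq> 0\<^sub>v n \<Longrightarrow> ?thesis" for v
    using mat_kernelD[OF M1] mat_kernelD[OF M2] mat_kernel_carrier[OF M1] by blast
  show ?thesis
  proof (cases "U1 \<inter> U2 = {}")
    case False
    then obtain v where v: "v \<in> U1" "v \<in> U2" by blast
    have "v \<noteq> 0\<^sub>v n" using V.vs_zero_lin_dep[of U1] U1 k1 v by auto
    then show ?thesis using good v U1 U2 by blast
  next
    case True
    have "card (U1 \<union> U2) = card U1 + card U2" using True U1(1) U2(1) by (simp add: card_Un_disjoint)
    then have cgt: "card (U1 \<union> U2) > V.dim" using gt U1 U2 V.dim_is_n by simp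
    have sub: "U1 \<union> U2 \<subseteq> carrier_vec n" using U1 U2 k1 k2 by auto
    have "V.lin_dep (U1 \<union> U2)"
      using V.li_le_dim[OF V.fin_dim, of "U1 \<union> U2"] sub cgt by auto
    then obtain A a w where A: "finite A" "A \<subseteq> U1 \<union> U2" "a \<in> A \<rightarrow> UNIV"
      "V.lincomb a A = 0\<^sub>v n" "w \<in> A" "a w \<noteq> 0"
      unfolding V.lin_dep_def by auto
    define A1 where "A1 = A \<inter> U1"
    define A2 where "A2 = A - U1"
    have A2U2: "A2 \<subseteq> U2" unfolding A2_def using A by auto
    have A1U1: "A1 \<subseteq> U1" unfolding A1_def by auto
    have AA: "A = A1 \<union> A2" "A1 \<inter> A2 = {}" unfolding A1_def A2_def by auto
    have c1: "A1 \<subseteq> carrier_vec n" "A2 \<subseteq> carrier_vec n" using A1U1 A2U2 sub by auto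
    have fin: "finite A1" "finite A2" using A(1) AA by auto
    define x where "x = V.lincomb a A1"
    define y where "y = V.lincomb a A2"
    have x: "x \<in> carrier_vec n" "y \<in> carrier_vec n" unfolding x_def y_def using c1 fin by auto
    have "V.lincomb a A = x + y"
      unfolding x_def y_def AA(1) using V.lincomb_union[OF c1 AA(2) fin] by simp
    then have xy: "x + y = 0\<^sub>v n" using A by simp
    have xk: "x \<in> mat_kernel M1"
    proof -
      have "K1.lincomb a A1 \<in> mat_kernel M1"
        using K1.Ker.lincomb_closed[of A1 a] A1U1 U1(3) by auto
      then show ?thesis unfolding x_def using K1.lincomb_same[of A1 a] A1U1 U1(3) by auto
    qed
    have yk: "y \<in> mat_kernel M2"
    proof -
      have "K2.lincomb a A2 \<in> mat_kernel M2"
        using K2.Ker.lincomb_closed[of A2 a] A2U2 U2(3) by auto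
      then show ?thesis unfolding y_def using K2.lincomb_same[of A2 a] A2U2 U2(3) by auto
    qed
    have yx: "y = - x"
    proof (rule eq_vecI)
      fix i assume "i < dim_vec (- x)"
      then have i: "i < n" using x by simp
      have "(x + y) $ i = 0" using xy i by simp
      then show "y $ i = (- x) $ i" using x i by (simp add: eq_neg_iff_add_eq_0 add.commute)
    qed (use x in simp)
    have xk2: "x \<in> mat_kernel M2"
    proof -
      have "(-1::'a) \<cdot>\<^sub>v y \<in> mat_kernel M2" using mat_kernel_smult[OF M2 yk] by blast
      moreover have "(-1::'a) \<cdot>\<^sub>v y = x" using yx x by auto
      ultimately show ?thesis by simp
    qed
    show ?thesis
    proof (cases "x = 0\<^sub>v n")
      case False
      then show ?thesis using good xk xk2 by blast
    next
      case True
      have y0: "y = 0\<^sub>v n" using yx True by simp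
      have "a \<in> A1 \<rightarrow> {0}"
        using V.not_lindepD[OF U1(4) fin(1) A1U1, of a] True unfolding x_def by auto
      moreover have "a \<in> A2 \<rightarrow> {0}"
        using V.not_lindepD[OF U2(4) fin(2) A2U2, of a] y0 unfolding y_def by auto
      ultimately show ?thesis using A(5,6) AA(1) by auto
    qed
  qed
qed


lemma kernel_dim_cong: "mat_kernel A = mat_kernel B \<Longrightarrow> dim_col A = dim_col B \<Longrightarrow> kernel_dim A = kernel_dim B"
  unfolding kernel_dim_def by simp

lemma mv0: "A \<in> carrier_mat n m \<Longrightarrow> A *\<^sub>v 0\<^sub>v m = 0\<^sub>v n"
  by (rule eq_vecI) auto

lemma kernel_pow_eq:
  fixes C :: "'a::field mat"
  assumes C: "C \<in> carrier_mat n n"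
    and sq: "\<And>v. v \<in> carrier_vec n \<Longrightarrow> C *\<^sub>v (C *\<^sub>v v) = 0\<^sub>v n \<Longrightarrow> C *\<^sub>v v = 0\<^sub>v n"
  shows "mat_kernel (C ^\<^sub>m Suc k) = mat_kernel C"
proof (induct k)
  case 0
  have "C ^\<^sub>m Suc 0 = C" using C by (simp add: left_mult_one_mat)
  then show ?case by simp
next
  case (Suc k)
  have P: "C ^\<^sub>m Suc k \<in> carrier_mat n n" by (rule pow_carrier_mat[OF C])
  have e: "C ^\<^sub>m Suc (Suc k) = C ^\<^sub>m Suc k * C" by simp
  show ?case
  proof (rule equalityI; rule subsetI)
    fix v assume "v \<in> mat_kernel (C ^\<^sub>m Suc (Suc k))"
    moreover have Ck: "C ^\<^sub>m Suc (Suc k) \<in> carrier_mat n n" by (rule pow_carrier_mat[OF C])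
    ultimately have v0: "v \<in> carrier_vec n" "C ^\<^sub>m Suc (Suc k) *\<^sub>v v = 0\<^sub>v n"
      using mat_kernelD[OF Ck] by auto
    then have v: "v \<in> carrier_vec n" "(C ^\<^sub>m Suc k * C) *\<^sub>v v = 0\<^sub>v n"
      using e by metis+
    have "C ^\<^sub>m Suc k *\<^sub>v (C *\<^sub>v v) = 0\<^sub>v n" using v(2) assoc_mult_mat_vec[OF P C v(1)] by argo
    then have "C *\<^sub>v v \<in> mat_kernel (C ^\<^sub>m Suc k)" using C v(1) by (intro mat_kernelI[OF P]) auto
    then have "C *\<^sub>v (C *\<^sub>v v) = 0\<^sub>v n" using Suc mat_kernelD[OF C] by auto
    then have "C *\<^sub>v v = 0\<^sub>v n" using sq v by auto
    then show "v \<in> mat_kernel C" by (rule mat_kernelI[OF C v(1)])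
  next
    fix v assume "v \<in> mat_kernel C"
    then have v: "v \<in> carrier_vec n" "C *\<^sub>v v = 0\<^sub>v n" using mat_kernelD[OF C] by auto
    have "(C ^\<^sub>m Suc k * C) *\<^sub>v v = 0\<^sub>v n" using assoc_mult_mat_vec[OF P C v(1)] v(2) mv0[OF P] by argo
    moreover have "C ^\<^sub>m Suc (Suc k) \<in> carrier_mat n n" using C by (rule pow_carrier_mat)
    ultimately show "v \<in> mat_kernel (C ^\<^sub>m Suc (Suc k))" using e v
      by (metis mat_kernelI)
  qed
qed

lemma sum_min_le: "(\<forall>x\<in>set xs. x \<le> (k::nat)) \<Longrightarrow> (\<Sum>s\<leftarrow>xs. min k s) = sum_list xs"
  by (induct xs) (auto simp: min.absorb2)

lemma kernel_dim_jnf: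
  fixes M :: "'a::field mat"
  assumes M: "M \<in> carrier_mat n n" and jnf: "jordan_nf M n_as"
    and sq: "\<And>v. v \<in> carrier_vec n \<Longrightarrow> char_matrix M \<mu> *\<^sub>v (char_matrix M \<mu> *\<^sub>v v) = 0\<^sub>v n
       \<Longrightarrow> char_matrix M \<mu> *\<^sub>v v = 0\<^sub>v n"
  shows "kernel_dim (char_matrix M \<mu>) = sum_list (map fst [(s, a)\<leftarrow>n_as . a = \<mu>])"
proof -
  let ?C = "char_matrix M \<mu>"
  have C: "?C \<in> carrier_mat n n" using M by simp
  have sum: "sum_list (map fst n_as) = n"
  proof -
    from jnf have "similar_mat M (jordan_matrix n_as)" unfolding jordan_nf_def by auto
    from similar_matD[OF this] obtain m where "M \<in> carrier_mat m m" "jordan_matrix n_as \<in> carrier_mat m m" by auto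
    then show ?thesis using M unfolding carrier_mat_def by auto
  qed
  have le: "\<forall>x\<in>set (map fst [(s, a)\<leftarrow>n_as . a = \<mu>]). x \<le> n"
  proof
    fix x assume "x \<in> set (map fst [(s, a)\<leftarrow>n_as . a = \<mu>])"
    then have "x \<in> set (map fst n_as)" by auto
    then show "x \<le> n" using sum member_le_sum_list[of x "map fst n_as"] by simp
  qed
  have "kernel_dim ?C = kernel_dim (?C ^\<^sub>m Suc n)"
    by (rule kernel_dim_cong) (use kernel_pow_eq[OF C sq] C in auto)
  also have "\<dots> = dim_gen_eigenspace M \<mu> (Suc n)" unfolding dim_gen_eigenspace_def ..
  also have "\<dots> = (\<Sum>s\<leftarrow>map fst [(s, a)\<leftarrow>n_as . a = \<mu>]. min (Suc n) s)"
    by (rule dim_gen_eigenspace[OF jnf])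
  also have "\<dots> = sum_list (map fst [(s, a)\<leftarrow>n_as . a = \<mu>])"
    by (rule sum_min_le) (use le in auto)
  finally show ?thesis .
qed


lemma smult_one_mv: "(v::'a::comm_ring_1 vec) \<in> carrier_vec d \<Longrightarrow> (c \<cdot>\<^sub>m 1\<^sub>m d) *\<^sub>v v = c \<cdot>\<^sub>v v"
  by (rule eq_vecI) (auto simp: scalar_prod_def if_distrib if_distribR sum.delta sum.delta' cong: if_cong)


lemma mat_eq_vec:
  fixes M N :: "'a::comm_ring_1 mat"
  assumes M: "M \<in> carrier_mat n n" and N: "N \<in> carrier_mat n n"
    and h: "\<And>v. v \<in> carrier_vec n \<Longrightarrow> M *\<^sub>v v = N *\<^sub>v v"
  shows "M = N"
proof (rule eq_matI)
  fix i j assume i: "i < dim_row N" and j: "j < dim_col N"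
  have "(M *\<^sub>v unit_vec n j) $ i = (N *\<^sub>v unit_vec n j) $ i" using h[of "unit_vec n j"] by simp
  then show "M $$ (i,j) = N $$ (i,j)" using i j M N by (simp add: scalar_prod_right_unit)
qed (use M N in auto)

lemma inv_ex:
  fixes P :: "'a::comm_ring_1 mat"
  assumes P: "P \<in> carrier_mat d d" and inv: "invertible_mat P"
  shows "\<exists>Q. Q \<in> carrier_mat d d \<and> P * Q = 1\<^sub>m d \<and> Q * P = 1\<^sub>m d"
proof -
  obtain Q where Q: "P * Q = 1\<^sub>m (dim_row P)" "Q * P = 1\<^sub>m (dim_row Q)"
    using inv unfolding invertible_mat_def inverts_mat_def by blast
  have "dim_col (P * Q) = dim_col (1\<^sub>m (dim_row P) :: 'a mat)" using Q(1) by simp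
  then have c: "dim_col Q = d" using P by simp
  have "dim_col (Q * P) = dim_col (1\<^sub>m (dim_row Q) :: 'a mat)" using Q(2) by simp
  then have r: "dim_row Q = d" using P by simp
  have Qc: "Q \<in> carrier_mat d d" using c r by (intro carrier_matI) auto
  have "dim_row P = d" using P by simp
  then show ?thesis using Q Qc r by metis
qed

abbreviation "Sg \<equiv> (m2 0 (-1) 1 0 :: int mat)"
abbreviation "Rg \<equiv> (m2 0 (-1) 1 1 :: int mat)"
abbreviation "Ng \<equiv> (m2 (-1) 0 0 (-1) :: int mat)"
abbreviation "Id2 \<equiv> (m2 1 0 0 1 :: int mat)"

lemma SL_facts: "Sg \<in> SL2Z" "Rg \<in> SL2Z" "Ng \<in> SL2Z" "Id2 \<in> SL2Z" "T_mat \<in> SL2Z"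
  by (auto intro!: m2_SL2Z simp: T_m2)

lemma rel_facts: "Sg * Sg = Ng" "Rg * Rg * Rg = Ng" "Id2 * Id2 = Id2" "Ng * Ng = Id2"
  "T_mat = Sg * Sg * Sg * Rg"
  by (auto simp: m2_mult T_m2)

lemma rep_carrier: "is_rep d \<rho> \<Longrightarrow> g \<in> SL2Z \<Longrightarrow> \<rho> g \<in> carrier_mat d d"
  unfolding is_rep_def by auto

lemma rep_mult: "is_rep d \<rho> \<Longrightarrow> g \<in> SL2Z \<Longrightarrow> h \<in> SL2Z \<Longrightarrow> \<rho> (g * h) = \<rho> g * \<rho> h"
  unfolding is_rep_def by auto

lemma rep_one: assumes r: "is_rep d \<rho>" shows "\<rho> Id2 = 1\<^sub>m d"
proof -
  have P: "\<rho> Id2 \<in> carrier_mat d d" "invertible_mat (\<rho> Id2)" using r SL_facts unfolding is_rep_def by auto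
  obtain Q where Q: "Q \<in> carrier_mat d d" "Q * \<rho> Id2 = 1\<^sub>m d" using inv_ex[OF P] by blast
  have PP: "\<rho> Id2 * \<rho> Id2 = \<rho> Id2" using rep_mult[OF r SL_facts(4) SL_facts(4)] rel_facts by simp
  have e1: "(Q * \<rho> Id2) * \<rho> Id2 = \<rho> Id2" unfolding Q(2) by (rule left_mult_one_mat[OF P(1)])
  have e2: "(Q * \<rho> Id2) * \<rho> Id2 = Q * (\<rho> Id2 * \<rho> Id2)" by (rule assoc_mult_mat[OF Q(1) P(1) P(1)])
  have "\<rho> Id2 = Q * \<rho> Id2" using e1 e2 PP by simp
  also have "\<dots> = 1\<^sub>m d" using Q by simp
  finally show ?thesis .
qed

lemma Nm_comm: assumes "g \<in> SL2Z" shows "Ng * g = g * Ng"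
proof -
  obtain a b c d where "g = m2 a b c d" using SL2Z_m2[OF assms] by blast
  then show ?thesis by (simp add: m2_mult)
qed

lemma irr_inv:
  assumes irr: "irreducible_rep d \<rho>" and sub: "is_subspace d W"
    and inv: "\<And>g w. g \<in> SL2Z \<Longrightarrow> w \<in> W \<Longrightarrow> \<rho> g *\<^sub>v w \<in> W"
  shows "W = {0\<^sub>v d} \<or> W = carrier_vec d"
  using irr sub inv unfolding irreducible_rep_def by blast

lemma schur_Z:
  assumes irr: "irreducible_rep d \<rho>"
  shows "\<exists>\<epsilon>::complex. (\<epsilon> = 1 \<or> \<epsilon> = -1) \<and> \<rho> Ng = \<epsilon> \<cdot>\<^sub>m 1\<^sub>m d"
proof -
  have r: "is_rep d \<rho>" using irr unfolding irreducible_rep_def by auto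
  define Z where "Z = \<rho> Ng"
  have Z: "Z \<in> carrier_mat d d" unfolding Z_def using rep_carrier[OF r SL_facts(3)] .
  have ZZ: "Z * Z = 1\<^sub>m d" unfolding Z_def using rep_mult[OF r SL_facts(3) SL_facts(3)] rel_facts rep_one[OF r] by simp
  have comm: "Z * \<rho> g = \<rho> g * Z" if g: "g \<in> SL2Z" for g
    unfolding Z_def using rep_mult[OF r SL_facts(3) g] rep_mult[OF r g SL_facts(3)] Nm_comm[OF g] by simp
  define W where "W = {v \<in> carrier_vec d. Z *\<^sub>v v = v}"
  have sub: "is_subspace d W"
    unfolding is_subspace_def W_def
    using Z by (auto simp: mult_add_distrib_mat_vec mult_mat_vec mv0)
  have inv: "\<rho> g *\<^sub>v w \<in> W" if g: "g \<in> SL2Z" and w: "w \<in> W" for g w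
  proof -
    have G: "\<rho> g \<in> carrier_mat d d" using rep_carrier[OF r g] .
    have wc: "w \<in> carrier_vec d" "Z *\<^sub>v w = w" using w unfolding W_def by auto
    have "Z *\<^sub>v (\<rho> g *\<^sub>v w) = (Z * \<rho> g) *\<^sub>v w" using Z G wc by (simp add: assoc_mult_mat_vec)
    also have "\<dots> = (\<rho> g * Z) *\<^sub>v w" using comm[OF g] by simp
    also have "\<dots> = \<rho> g *\<^sub>v w" using Z G wc by (simp add: assoc_mult_mat_vec)
    finally show ?thesis unfolding W_def using G wc by auto
  qed
  from irr_inv[OF irr sub inv] show ?thesis
  proof
    assume W0: "W = {0\<^sub>v d}"
    have "Z = (-1::complex) \<cdot>\<^sub>m 1\<^sub>m d"
    proof (rule mat_eq_vec[OF Z])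
      fix v :: "complex vec" assume v: "v \<in> carrier_vec d"
      define u where "u = Z *\<^sub>v v + v"
      have uc: "u \<in> carrier_vec d" unfolding u_def using Z v by simp
      have "Z *\<^sub>v u = (Z * Z) *\<^sub>v v + Z *\<^sub>v v" unfolding u_def using Z v
        by (simp add: mult_add_distrib_mat_vec assoc_mult_mat_vec)
      also have "\<dots> = u" unfolding u_def ZZ using v Z comm_add_vec[of v d "Z *\<^sub>v v"] by simp
      finally have "u \<in> W" unfolding W_def using uc by simp
      then have "u = 0\<^sub>v d" using W0 by simp
      have "Z *\<^sub>v v = (-1::complex) \<cdot>\<^sub>v v"
      proof (rule eq_vecI)
        fix i assume "i < dim_vec ((-1::complex) \<cdot>\<^sub>v v)"
        then have i: "i < d" using v by simp
        have "u $ i = 0" using \<open>u = 0\<^sub>v d\<close> i by simp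
        then have "(Z *\<^sub>v v) $ i + v $ i = 0" unfolding u_def using i v Z by simp
        then show "(Z *\<^sub>v v) $ i = ((-1::complex) \<cdot>\<^sub>v v) $ i" using i v
          by (simp add: add_eq_0_iff2)
      qed (use Z v in simp)
      then show "Z *\<^sub>v v = ((-1::complex) \<cdot>\<^sub>m 1\<^sub>m d) *\<^sub>v v" using smult_one_mv[OF v] by simp
    qed simp
    then show ?thesis unfolding Z_def by auto
  next
    assume WC: "W = carrier_vec d"
    have "Z = (1::complex) \<cdot>\<^sub>m 1\<^sub>m d"
    proof (rule mat_eq_vec[OF Z])
      fix v :: "complex vec" assume v: "v \<in> carrier_vec d"
      then have "Z *\<^sub>v v = v" using WC unfolding W_def by auto
      then show "Z *\<^sub>v v = ((1::complex) \<cdot>\<^sub>m 1\<^sub>m d) *\<^sub>v v" using smult_one_mv[OF v] v by simp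
    qed simp
    then show ?thesis unfolding Z_def by auto
  qed
qed


lemma cm_mv: "M \<in> carrier_mat n n \<Longrightarrow> x \<in> carrier_vec n \<Longrightarrow>
   char_matrix M (\<mu>::'a::field) *\<^sub>v x = M *\<^sub>v x + (-\<mu>) \<cdot>\<^sub>v x"
  unfolding char_matrix_def
  by (simp add: add_mult_distrib_mat_vec[of M n n] smult_one_mv)

lemma lin2: "(M::'a::field mat) \<in> carrier_mat n n \<Longrightarrow> x \<in> carrier_vec n \<Longrightarrow> y \<in> carrier_vec n \<Longrightarrow>
   M *\<^sub>v (x + k \<cdot>\<^sub>v y) = M *\<^sub>v x + k \<cdot>\<^sub>v (M *\<^sub>v y)"
  by (simp add: mult_add_distrib_mat_vec[of M n n] mult_mat_vec)

lemma lin3: "(M::'a::field mat) \<in> carrier_mat n n \<Longrightarrow> x \<in> carrier_vec n \<Longrightarrow> y \<in> carrier_vec n \<Longrightarrow> z \<in> carrier_vec n \<Longrightarrow>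
   M *\<^sub>v (x + k \<cdot>\<^sub>v y + l \<cdot>\<^sub>v z) = M *\<^sub>v x + k \<cdot>\<^sub>v (M *\<^sub>v y) + l \<cdot>\<^sub>v (M *\<^sub>v z)"
  by (simp add: mult_add_distrib_mat_vec[of M n n] mult_mat_vec assoc_add_vec[of _ n])

lemma mm_act: "(M::'a::comm_ring_1 mat) \<in> carrier_mat n n \<Longrightarrow> x \<in> carrier_vec n \<Longrightarrow> M * M = \<epsilon> \<cdot>\<^sub>m 1\<^sub>m n \<Longrightarrow>
   M *\<^sub>v (M *\<^sub>v x) = \<epsilon> \<cdot>\<^sub>v x"
  by (metis assoc_mult_mat_vec smult_one_mv)

lemma sqB:
  fixes M :: "complex mat"
  assumes M: "M \<in> carrier_mat n n" and MM: "M * M = \<epsilon> \<cdot>\<^sub>m 1\<^sub>m n" and b2: "\<beta> * \<beta> = \<epsilon>" and b0: "\<beta> \<noteq> 0"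
    and v: "v \<in> carrier_vec n"
    and h: "char_matrix M \<beta> *\<^sub>v (char_matrix M \<beta> *\<^sub>v v) = 0\<^sub>v n"
  shows "char_matrix M \<beta> *\<^sub>v v = 0\<^sub>v n"
proof -
  define b where "b = M *\<^sub>v v"
  have bc: "b \<in> carrier_vec n" unfolding b_def using M v by simp
  have Mb: "M *\<^sub>v b = \<epsilon> \<cdot>\<^sub>v v" unfolding b_def by (rule mm_act[OF M v MM])
  have Cv: "char_matrix M \<beta> *\<^sub>v v = b + (-\<beta>) \<cdot>\<^sub>v v" unfolding b_def by (rule cm_mv[OF M v])
  have wc: "b + (-\<beta>) \<cdot>\<^sub>v v \<in> carrier_vec n" using bc v by simp
  have "char_matrix M \<beta> *\<^sub>v (b + (-\<beta>) \<cdot>\<^sub>v v) = M *\<^sub>v (b + (-\<beta>) \<cdot>\<^sub>v v) + (-\<beta>) \<cdot>\<^sub>v (b + (-\<beta>) \<cdot>\<^sub>v v)"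
    by (rule cm_mv[OF M wc])
  also have "M *\<^sub>v (b + (-\<beta>) \<cdot>\<^sub>v v) = \<epsilon> \<cdot>\<^sub>v v + (-\<beta>) \<cdot>\<^sub>v b"
    using lin2[OF M bc v] Mb b_def by simp
  finally have E: "(\<epsilon> \<cdot>\<^sub>v v + (-\<beta>) \<cdot>\<^sub>v b) + (-\<beta>) \<cdot>\<^sub>v (b + (-\<beta>) \<cdot>\<^sub>v v) = 0\<^sub>v n"
    using h Cv by simp
  show ?thesis unfolding Cv
  proof (rule eq_vecI)
    fix i assume "i < dim_vec (0\<^sub>v n :: complex vec)"
    then have i: "i < n" by simp
    have "((\<epsilon> \<cdot>\<^sub>v v + (-\<beta>) \<cdot>\<^sub>v b) + (-\<beta>) \<cdot>\<^sub>v (b + (-\<beta>) \<cdot>\<^sub>v v)) $ i = 0" using E i by simp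
    then have H: "\<epsilon> * v $ i + (- (\<beta> * b $ i) - \<beta> * (b $ i - \<beta> * v $ i)) = 0" using i v bc by simp
    have "\<beta> * (2 * (\<beta> * v $ i - b $ i)) = (\<epsilon> * v $ i + (- (\<beta> * b $ i) - \<beta> * (b $ i - \<beta> * v $ i))) + v $ i * (\<beta> * \<beta> - \<epsilon>)"
      by (simp add: algebra_simps)
    then have "\<beta> * (2 * (\<beta> * v $ i - b $ i)) = 0" using H b2 by simp
    then have "b $ i - \<beta> * v $ i = 0" using b0 by simp
    then show "(b + (-\<beta>) \<cdot>\<^sub>v v) $ i = (0\<^sub>v n) $ i" using i v bc by simp
  qed (use bc v in simp)
qed

lemma sqA:
  fixes M :: "complex mat"
  assumes M: "M \<in> carrier_mat n n" and MM: "M * M * M = \<epsilon> \<cdot>\<^sub>m 1\<^sub>m n" and a3: "\<alpha>^3 = \<epsilon>" and a0: "\<alpha> \<noteq> 0"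
    and v: "v \<in> carrier_vec n"
    and h: "char_matrix M \<alpha> *\<^sub>v (char_matrix M \<alpha> *\<^sub>v v) = 0\<^sub>v n"
  shows "char_matrix M \<alpha> *\<^sub>v v = 0\<^sub>v n"
proof -
  define b where "b = M *\<^sub>v v"
  define c where "c = M *\<^sub>v b"
  have bc: "b \<in> carrier_vec n" "c \<in> carrier_vec n" unfolding b_def c_def using M v by auto
  have Mc: "M *\<^sub>v c = \<epsilon> \<cdot>\<^sub>v v"
  proof -
    have "M *\<^sub>v c = (M * M * M) *\<^sub>v v" unfolding c_def b_def using M v
      by (simp add: assoc_mult_mat_vec[of _ n n _ n])
    then show ?thesis using MM smult_one_mv[OF v] by simp
  qed
  have Cv: "char_matrix M \<alpha> *\<^sub>v v = b + (-\<alpha>) \<cdot>\<^sub>v v" unfolding b_def by (rule cm_mv[OF M v])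
  have wc: "b + (-\<alpha>) \<cdot>\<^sub>v v \<in> carrier_vec n" using bc v by simp
  have "char_matrix M \<alpha> *\<^sub>v (b + (-\<alpha>) \<cdot>\<^sub>v v) = M *\<^sub>v (b + (-\<alpha>) \<cdot>\<^sub>v v) + (-\<alpha>) \<cdot>\<^sub>v (b + (-\<alpha>) \<cdot>\<^sub>v v)"
    by (rule cm_mv[OF M wc])
  also have "M *\<^sub>v (b + (-\<alpha>) \<cdot>\<^sub>v v) = c + (-\<alpha>) \<cdot>\<^sub>v b"
    using lin2[OF M bc(1) v] b_def c_def by simp
  finally have E: "(c + (-\<alpha>) \<cdot>\<^sub>v b) + (-\<alpha>) \<cdot>\<^sub>v (b + (-\<alpha>) \<cdot>\<^sub>v v) = 0\<^sub>v n"
    using h Cv by simp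
  have X: "(c + (-\<alpha>) \<cdot>\<^sub>v b) + (-\<alpha>) \<cdot>\<^sub>v (b + (-\<alpha>) \<cdot>\<^sub>v v) = c + (-2*\<alpha>) \<cdot>\<^sub>v b + (\<alpha>^2) \<cdot>\<^sub>v v"
    by (rule eq_vecI) (use bc v in \<open>auto simp: algebra_simps power2_eq_square\<close>)
  have E2: "M *\<^sub>v (c + (-2*\<alpha>) \<cdot>\<^sub>v b + (\<alpha>^2) \<cdot>\<^sub>v v) = 0\<^sub>v n"
    using E X M mv0[OF M] by metis
  have E3: "\<epsilon> \<cdot>\<^sub>v v + (-2*\<alpha>) \<cdot>\<^sub>v c + (\<alpha>^2) \<cdot>\<^sub>v b = 0\<^sub>v n"
    using E2 lin3[OF M bc(2) bc(1) v] Mc b_def c_def by simp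
  show ?thesis unfolding Cv
  proof (rule eq_vecI)
    fix i assume "i < dim_vec (0\<^sub>v n :: complex vec)"
    then have i: "i < n" by simp
    have e1: "c $ i - 2*\<alpha> * b $ i + \<alpha>^2 * v $ i = 0"
      using arg_cong[OF E, of "\<lambda>x. x $ i"] X i bc v by (simp add: algebra_simps)
    have e2: "\<epsilon> * v $ i - 2*\<alpha> * c $ i + \<alpha>^2 * b $ i = 0"
      using arg_cong[OF E3, of "\<lambda>x. x $ i"] i bc v by (simp add: algebra_simps)
    have "3 * \<alpha>^2 * (b $ i - \<alpha> * v $ i) = 0"
    proof -
      have "c $ i = 2*\<alpha> * b $ i - \<alpha>^2 * v $ i" using e1 by (simp add: algebra_simps)
      then have H: "\<epsilon> * v $ i - 2*\<alpha> * (2*\<alpha> * b $ i - \<alpha>^2 * v $ i) + \<alpha>^2 * b $ i = 0" using e2 by simp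
      have "3 * \<alpha>^2 * (b $ i - \<alpha> * v $ i) = - (\<epsilon> * v $ i - 2*\<alpha> * (2*\<alpha> * b $ i - \<alpha>^2 * v $ i) + \<alpha>^2 * b $ i) + v $ i * (\<epsilon> - \<alpha>^3)"
        by (simp add: algebra_simps power2_eq_square power3_eq_cube)
      then show ?thesis using H a3 by simp
    qed
    then have "b $ i - \<alpha> * v $ i = 0" using a0 by simp
    then show "(b + (-\<alpha>) \<cdot>\<^sub>v v) $ i = (0\<^sub>v n) $ i" using i v bc by simp
  qed (use bc v in simp)
qed


lemma det_charpoly0:
  fixes M :: "'a::field mat"
  assumes M: "M \<in> carrier_mat n n"
  shows "det M = (-1)^n * poly (char_poly M) 0"
proof -
  have "poly (char_poly M) 0 = det (- char_matrix M 0)" by (rule char_poly_matrix[OF M])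
  also have "- char_matrix M 0 = (-1) \<cdot>\<^sub>m M" unfolding char_matrix_def using M
    by (intro eq_matI) auto
  also have "det \<dots> = (-1)^n * det M" using M by simp
  finally show ?thesis by simp
qed

lemma poly_prod_jnf: "poly (\<Prod>(s,a)\<leftarrow>n_as. [:- a, 1:] ^ s) x = (\<Prod>(s,a)\<leftarrow>n_as. (- a + x) ^ s)"
  by (induct n_as) (auto simp: poly_power)
lemma prod_neg_pow: "(\<Prod>(s,a)\<leftarrow>n_as. (- (a::'a::comm_ring_1)) ^ s) = (-1) ^ sum_list (map fst n_as) * (\<Prod>(s,a)\<leftarrow>n_as. a ^ s)"
proof (induct n_as)
  case (Cons p n_as)
  obtain s a where p: "p = (s,a)" by force
  have e: "(- a) ^ s = (-1)^s * a ^ s" by (rule power_minus)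
  have "(\<Prod>(s,a)\<leftarrow>p # n_as. (- a) ^ s) = (- a) ^ s * (\<Prod>(s,a)\<leftarrow>n_as. (- a) ^ s)" using p by simp
  also have "\<dots> = ((-1)^s * a ^ s) * ((-1) ^ sum_list (map fst n_as) * (\<Prod>(s,a)\<leftarrow>n_as. a ^ s))"
    using Cons e by simp
  also have "\<dots> = (-1) ^ (s + sum_list (map fst n_as)) * (a ^ s * (\<Prod>(s,a)\<leftarrow>n_as. a ^ s))"
    by (simp only: power_add mult_ac)
  finally show ?case using p by simp
qed simp

lemma jnf_sum: assumes "jordan_nf M n_as" "M \<in> carrier_mat n n"
  shows "sum_list (map fst n_as) = n"
proof -
  from assms(1) have "similar_mat M (jordan_matrix n_as)" unfolding jordan_nf_def by auto
  from similar_matD[OF this] obtain m where "M \<in> carrier_mat m m" "jordan_matrix n_as \<in> carrier_mat m m" by auto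
  then show ?thesis using assms(2) unfolding carrier_mat_def by auto
qed

lemma jnf_det:
  fixes M :: "'a::field mat"
  assumes M: "M \<in> carrier_mat n n" and jnf: "jordan_nf M n_as"
  shows "det M = (\<Prod>(s,a)\<leftarrow>n_as. a ^ s)"
proof -
  have "det M = (-1)^n * poly (char_poly M) 0" by (rule det_charpoly0[OF M])
  also have "poly (char_poly M) 0 = (-1)^n * (\<Prod>(s,a)\<leftarrow>n_as. a ^ s)"
    unfolding jordan_nf_char_poly[OF jnf] poly_prod_jnf add_0_right prod_neg_pow jnf_sum[OF jnf M] ..
  finally show ?thesis by (simp flip: power_mult_distrib)
qed

lemma jnf_eig:
  fixes M :: "'a::field mat"
  assumes M: "M \<in> carrier_mat n n" and jnf: "jordan_nf M n_as" and sa: "(s,a) \<in> set n_as"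
  shows "eigenvalue M a"
proof -
  have s: "s \<noteq> 0" using jnf sa unfolding jordan_nf_def by force
  have "poly (char_poly M) a = (\<Prod>(s,a')\<leftarrow>n_as. (- a' + a) ^ s)"
    unfolding jordan_nf_char_poly[OF jnf] poly_prod_jnf ..
  also have "\<dots> = 0" using sa s
    by (induct n_as) auto
  finally show ?thesis using eigenvalue_root_char_poly[OF M] by simp
qed

lemma jnf_exists_complex: "(M::complex mat) \<in> carrier_mat n n \<Longrightarrow> \<exists>n_as. jordan_nf M n_as"
  using char_poly_factorized jordan_nf_exists by blast

definition mlt :: "(nat \<times> 'a) list \<Rightarrow> 'a \<Rightarrow> nat" where
  "mlt n_as x = sum_list (map fst [(s, a)\<leftarrow>n_as . a = x])"

lemma group_prod:
  fixes n_as :: "(nat \<times> 'a::comm_monoid_mult) list"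
  assumes "finite V" "\<forall>(s,a)\<in>set n_as. a \<in> V"
  shows "(\<Prod>(s,a)\<leftarrow>n_as. a ^ s) = (\<Prod>x\<in>V. x ^ mlt n_as x)"
  using assms(2)
proof (induct n_as)
  case Nil then show ?case by (simp add: mlt_def)
next
  case (Cons p n_as)
  obtain s a where p: "p = (s,a)" by force
  have aV: "a \<in> V" using Cons.prems p by auto
  have IH: "(\<Prod>(s,a)\<leftarrow>n_as. a ^ s) = (\<Prod>x\<in>V. x ^ mlt n_as x)" using Cons by auto
  have m: "mlt (p # n_as) x = mlt n_as x + (if x = a then s else 0)" for x
    unfolding mlt_def p by auto
  have "(\<Prod>x\<in>V. x ^ mlt (p # n_as) x) = (\<Prod>x\<in>V. x ^ mlt n_as x * x ^ (if x = a then s else 0))"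
    unfolding m by (simp add: power_add)
  also have "\<dots> = (\<Prod>x\<in>V. x ^ mlt n_as x) * (\<Prod>x\<in>V. x ^ (if x = a then s else 0))"
    by (rule prod.distrib)
  also have "(\<Prod>x\<in>V. x ^ (if x = a then s else 0)) = a ^ s"
    using aV assms(1) by (simp add: if_distrib prod.delta' cong: if_cong)
  finally show ?case using IH p by (simp add: mult.commute)
qed

lemma group_sum:
  assumes "finite V" "\<forall>(s,a)\<in>set n_as. a \<in> V"
  shows "sum_list (map fst n_as) = (\<Sum>x\<in>V. mlt n_as x)"
  using assms(2)
proof (induct n_as)
  case Nil then show ?case by (simp add: mlt_def)
next
  case (Cons p n_as)
  obtain s a where p: "p = (s,a)" by force
  have aV: "a \<in> V" using Cons.prems p by auto
  have m: "mlt (p # n_as) x = mlt n_as x + (if x = a then s else 0)" for x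
    unfolding mlt_def p by auto
  have "(\<Sum>x\<in>V. mlt (p # n_as) x) = (\<Sum>x\<in>V. mlt n_as x) + (\<Sum>x\<in>V. (if x = a then s else 0))"
    unfolding m by (rule sum.distrib)
  also have "(\<Sum>x\<in>V. (if x = a then s else 0)) = s" using aV assms(1) by simp
  finally show ?case using Cons p by auto
qed


lemma no_common:
  assumes irr: "irreducible_rep d \<rho>" and d2: "d \<ge> 2"
    and v: "v \<in> carrier_vec d" "v \<noteq> 0\<^sub>v d"
    and Bv: "\<rho> Sg *\<^sub>v v = \<beta> \<cdot>\<^sub>v v" and Av: "\<rho> Rg *\<^sub>v v = \<alpha> \<cdot>\<^sub>v v"
  shows False
proof -
  have r: "is_rep d \<rho>" using irr unfolding irreducible_rep_def by auto
  define L where "L = {c \<cdot>\<^sub>v v | c. True}"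
  have Lc: "L \<subseteq> carrier_vec d" unfolding L_def using v by auto
  have sub: "is_subspace d L"
    unfolding is_subspace_def
  proof (intro conjI ballI allI)
    show "L \<subseteq> carrier_vec d" by (rule Lc)
    have "0\<^sub>v d = (0::complex) \<cdot>\<^sub>v v" using v by (intro eq_vecI) auto
    then show "0\<^sub>v d \<in> L" unfolding L_def by blast
  next
    fix x y assume "x \<in> L" "y \<in> L"
    then obtain a b where "x = a \<cdot>\<^sub>v v" "y = b \<cdot>\<^sub>v v" unfolding L_def by blast
    then have "x + y = (a + b) \<cdot>\<^sub>v v" using v by (intro eq_vecI) (auto simp: algebra_simps)
    then show "x + y \<in> L" unfolding L_def by blast
  next
    fix k x assume "x \<in> L"
    then obtain a where "x = a \<cdot>\<^sub>v v" unfolding L_def by blast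
    then have "k \<cdot>\<^sub>v x = (k * a) \<cdot>\<^sub>v v" using v by (intro eq_vecI) auto
    then show "k \<cdot>\<^sub>v x \<in> L" unfolding L_def by blast
  qed
  have act: "\<rho> g *\<^sub>v (c \<cdot>\<^sub>v v) \<in> L" if g: "g \<in> {Sg, Rg}" for g c
  proof -
    have G: "\<rho> g \<in> carrier_mat d d" using rep_carrier[OF r] SL_facts g by auto
    have "\<rho> g *\<^sub>v (c \<cdot>\<^sub>v v) = c \<cdot>\<^sub>v (\<rho> g *\<^sub>v v)" by (rule mult_mat_vec[OF G v(1)])
    also have "\<dots> = (c * (if g = Sg then \<beta> else \<alpha>)) \<cdot>\<^sub>v v"
    proof (cases "g = Sg")
      case True
      then show ?thesis using Bv by (simp add: smult_smult_assoc)
    next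
      case False
      then have "g = Rg" using g by auto
      then show ?thesis using Av False by (simp add: smult_smult_assoc)
    qed
    finally show ?thesis unfolding L_def by blast
  qed
  have inv: "\<forall>w\<in>L. \<rho> g *\<^sub>v w \<in> L" if g: "g \<in> SL2Z" for g
  proof (rule SL2Z_gen[OF _ _ _ g])
    fix g h assume g: "g \<in> SL2Z" and h: "h \<in> SL2Z" and Pg: "\<forall>w\<in>L. \<rho> g *\<^sub>v w \<in> L"
      and Ph: "\<forall>w\<in>L. \<rho> h *\<^sub>v w \<in> L"
    show "\<forall>w\<in>L. \<rho> (g * h) *\<^sub>v w \<in> L"
    proof
      fix w assume w: "w \<in> L"
      have wc: "w \<in> carrier_vec d" using w Lc by auto
      have "\<rho> (g * h) *\<^sub>v w = \<rho> g *\<^sub>v (\<rho> h *\<^sub>v w)"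
        using rep_mult[OF r g h] assoc_mult_mat_vec[OF rep_carrier[OF r g] rep_carrier[OF r h] wc] by simp
      then show "\<rho> (g * h) *\<^sub>v w \<in> L" using Pg Ph w by simp
    qed
  next
    show "\<forall>w\<in>L. \<rho> Sg *\<^sub>v w \<in> L" using act[of Sg] unfolding L_def by auto
  next
    show "\<forall>w\<in>L. \<rho> Rg *\<^sub>v w \<in> L" using act[of Rg] unfolding L_def by auto
  qed
  have "L = {0\<^sub>v d} \<or> L = carrier_vec d"
    by (rule irr_inv[OF irr sub]) (use inv in blast)
  then show False
  proof
    assume "L = {0\<^sub>v d}"
    moreover have "v \<in> L" unfolding L_def by (rule CollectI, rule exI[of _ 1]) (use v in auto)
    ultimately show False using v by simp
  next
    assume LC: "L = carrier_vec d"
    have "unit_vec d 0 \<in> L" "unit_vec d 1 \<in> L" using LC by auto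
    then obtain a b where a: "unit_vec d 0 = a \<cdot>\<^sub>v v" and b: "unit_vec d 1 = b \<cdot>\<^sub>v v"
      unfolding L_def by blast
    have 0: "0 < d" "1 < d" using d2 by auto
    have h: "a * v $ 0 = 1" "a * v $ 1 = 0" "b * v $ 1 = 1"
      using arg_cong[OF a, of "\<lambda>x. x $ 0"] arg_cong[OF a, of "\<lambda>x. x $ 1"]
        arg_cong[OF b, of "\<lambda>x. x $ 1"] 0 v by auto
    have "a \<noteq> 0" using h(1) by auto
    then have "v $ 1 = 0" using h(2) by simp
    then show False using h(3) by simp
  qed
qed


lemma smult_cancel:
  fixes v :: "'a::field vec"
  assumes v: "v \<in> carrier_vec n" "v \<noteq> 0\<^sub>v n" and e: "x \<cdot>\<^sub>v v = y \<cdot>\<^sub>v v"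
  shows "x = y"
proof -
  obtain i where i: "i < n" "v $ i \<noteq> 0"
  proof -
    have "\<exists>i<n. v $ i \<noteq> 0"
    proof (rule ccontr)
      assume "\<not> (\<exists>i<n. v $ i \<noteq> 0)"
      then have "v = 0\<^sub>v n" using v(1) by (intro eq_vecI) auto
      then show False using v(2) by simp
    qed
    then show ?thesis using that by blast
  qed
  have "x * v $ i = y * v $ i" using arg_cong[OF e, of "\<lambda>w. w $ i"] i v by simp
  then show ?thesis using i by simp
qed

lemma eig_pow:
  fixes M :: "'a::field mat"
  assumes M: "M \<in> carrier_mat n n" and ev: "eigenvalue M a" and P: "M ^\<^sub>m k = \<epsilon> \<cdot>\<^sub>m 1\<^sub>m n"
  shows "a ^ k = \<epsilon>"
proof -
  obtain v where v: "eigenvector M v a" using ev unfolding eigenvalue_def by blast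
  have vc: "v \<in> carrier_vec n" "v \<noteq> 0\<^sub>v n" using v M unfolding eigenvector_def by auto
  have "M ^\<^sub>m k *\<^sub>v v = a ^ k \<cdot>\<^sub>v v" by (rule eigenvector_pow[OF M v])
  moreover have "M ^\<^sub>m k *\<^sub>v v = \<epsilon> \<cdot>\<^sub>v v" using P smult_one_mv[OF vc(1)] by simp
  ultimately show ?thesis using smult_cancel[OF vc] by metis
qed

lemma pow2_mat: "M \<in> carrier_mat n n \<Longrightarrow> M ^\<^sub>m 2 = M * M"
  by (simp add: numeral_2_eq_2)

lemma pow3_mat: "M \<in> carrier_mat n n \<Longrightarrow> M ^\<^sub>m 3 = M * M * M"
  by (simp add: numeral_3_eq_3)

lemma cm_eig:
  fixes M :: "'a::field mat"
  assumes M: "M \<in> carrier_mat n n" and v: "v \<in> carrier_vec n" and h: "char_matrix M x *\<^sub>v v = 0\<^sub>v n"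
  shows "M *\<^sub>v v = x \<cdot>\<^sub>v v"
proof (rule eq_vecI)
  fix i assume "i < dim_vec (x \<cdot>\<^sub>v v)"
  then have i: "i < n" using v by simp
  have "(M *\<^sub>v v + (-x) \<cdot>\<^sub>v v) $ i = 0" using h cm_mv[OF M v, of x] i by simp
  then show "(M *\<^sub>v v) $ i = (x \<cdot>\<^sub>v v) $ i" using i v M by simp
qed (use M v in simp)

definition \<omega> :: complex where "\<omega> = Complex (-1/2) (sqrt 3 / 2)"

lemma omega_facts: "\<omega> * \<omega> + \<omega> + 1 = 0" "\<omega> ^ 3 = 1" "\<omega> \<noteq> 1" "\<omega> * \<omega> \<noteq> 1" "\<omega> \<noteq> \<omega> * \<omega>" "\<omega> \<noteq> 0"
proof -
  have s: "sqrt 3 * sqrt 3 = (3::real)" by simp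
  show o: "\<omega> * \<omega> + \<omega> + 1 = 0" unfolding \<omega>_def by (simp add: complex_eq_iff s)
  have "\<omega> ^ 3 - 1 = (\<omega> - 1) * (\<omega> * \<omega> + \<omega> + 1)" by (simp add: algebra_simps power3_eq_cube)
  then show "\<omega> ^ 3 = 1" using o by simp
  show "\<omega> \<noteq> 1" unfolding \<omega>_def by (simp add: complex_eq_iff)
  show "\<omega> * \<omega> \<noteq> 1" unfolding \<omega>_def by (simp add: complex_eq_iff)
  show "\<omega> \<noteq> \<omega> * \<omega>" unfolding \<omega>_def by (simp add: complex_eq_iff)
  show "\<omega> \<noteq> 0" unfolding \<omega>_def by (simp add: complex_eq_iff)
qed

lemma cube_roots:
  fixes e a :: complex
  assumes h: "a ^ 3 = e ^ 3"
  shows "a = e \<or> a = e * \<omega> \<or> a = e * \<omega> * \<omega>"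
proof -
  have "(a - e) * (a - e * \<omega>) * (a - e * \<omega> * \<omega>) = a^3 - a*a*e*(\<omega>*\<omega>+\<omega>+1) + a*e*e*(\<omega>*\<omega>+\<omega>+\<omega>^3) - e^3*\<omega>^3"
    by (simp add: algebra_simps power3_eq_cube)
  also have "\<dots> = 0" using omega_facts(1,2) h by simp
  finally show ?thesis by auto
qed


lemma eigen_analysis:
  assumes irr: "irreducible_rep d \<rho>" and d2: "d \<ge> 2" and eps: "\<epsilon> = 1 \<or> \<epsilon> = -1"
    and BB: "\<rho> Sg * \<rho> Sg = \<epsilon> \<cdot>\<^sub>m 1\<^sub>m d" and AAA: "\<rho> Rg * \<rho> Rg * \<rho> Rg = \<epsilon> \<cdot>\<^sub>m 1\<^sub>m d"
  shows "(d = 3 \<longrightarrow> det (\<rho> Rg) = \<epsilon>) \<and> (d = 4 \<longrightarrow> det (\<rho> Sg) = 1)"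
proof -
  have r: "is_rep d \<rho>" using irr unfolding irreducible_rep_def by auto
  define B where "B = \<rho> Sg"
  define A where "A = \<rho> Rg"
  have Bc: "B \<in> carrier_mat d d" unfolding B_def using rep_carrier[OF r] SL_facts by auto
  have Ac: "A \<in> carrier_mat d d" unfolding A_def using rep_carrier[OF r] SL_facts by auto
  note BB = BB[folded B_def] and AAA = AAA[folded A_def]
  obtain nB where jB: "jordan_nf B nB" using jnf_exists_complex[OF Bc] by blast
  obtain nA where jA: "jordan_nf A nA" using jnf_exists_complex[OF Ac] by blast
  have e2: "\<epsilon> * \<epsilon> = 1" and e3: "\<epsilon> ^ 3 = \<epsilon>" and e0: "\<epsilon> \<noteq> 0" using eps by (auto simp: power3_eq_cube)
  define c :: complex where "c = (if \<epsilon> = 1 then 1 else \<i>)"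
  have cc: "c * c = \<epsilon>" using eps unfolding c_def by auto
  have c0: "c \<noteq> 0" unfolding c_def by auto
  have cne: "c \<noteq> - c" unfolding c_def by (auto simp: complex_eq_iff)
  have P2: "B ^\<^sub>m 2 = \<epsilon> \<cdot>\<^sub>m 1\<^sub>m d" using pow2_mat[OF Bc] BB by (rule trans)
  have P3: "A ^\<^sub>m 3 = \<epsilon> \<cdot>\<^sub>m 1\<^sub>m d" using pow3_mat[OF Ac] AAA by (rule trans)
  have VB0: "a \<in> {c, -c}" if sa: "(s,a) \<in> set nB" for s a
  proof -
    have "a ^ 2 = \<epsilon>" by (rule eig_pow[OF Bc jnf_eig[OF Bc jB sa] P2])
    then have "(a - c) * (a + c) = 0" using cc by (simp add: algebra_simps power2_eq_square)
    then show ?thesis by (auto simp: add_eq_0_iff2)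
  qed
  have VB: "\<forall>(s,a)\<in>set nB. a \<in> {c, -c}" using VB0 by blast
  define VA where "VA = {\<epsilon>, \<epsilon> * \<omega>, \<epsilon> * \<omega> * \<omega>}"
  have VA0: "a \<in> VA" if sa: "(s,a) \<in> set nA" for s a
  proof -
    have "a ^ 3 = \<epsilon>" by (rule eig_pow[OF Ac jnf_eig[OF Ac jA sa] P3])
    then have "a ^ 3 = \<epsilon> ^ 3" using e3 by simp
    then show "a \<in> VA" unfolding VA_def using cube_roots by auto
  qed
  have VA: "\<forall>(s,a)\<in>set nA. a \<in> VA" using VA0 by blast
  have VA3: "x \<in> VA \<Longrightarrow> x ^ 3 = \<epsilon> \<and> x \<noteq> 0" for x
    unfolding VA_def using omega_facts e3 e0 by (auto simp: power_mult_distrib)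
  have kB: "kernel_dim (char_matrix B x) = mlt nB x" if x: "x \<in> {c, -c}" for x
  proof -
    have xx: "x * x = \<epsilon>" "x \<noteq> 0" using x cc c0 by auto
    show ?thesis unfolding mlt_def
      by (rule kernel_dim_jnf[OF Bc jB]) (rule sqB[OF Bc BB xx])
  qed
  have kA: "kernel_dim (char_matrix A x) = mlt nA x" if x: "x \<in> VA" for x
  proof -
    have xx: "x ^ 3 = \<epsilon>" "x \<noteq> 0" using VA3[OF x] by auto
    show ?thesis unfolding mlt_def
      by (rule kernel_dim_jnf[OF Ac jA]) (rule sqA[OF Ac AAA xx])
  qed
  have sB: "mlt nB c + mlt nB (-c) = d"
    using group_sum[of "{c,-c}" nB] VB jnf_sum[OF jB Bc] cne by simp
  have dist: "\<epsilon> \<noteq> \<epsilon> * \<omega>" "\<epsilon> \<noteq> \<epsilon> * \<omega> * \<omega>" "\<epsilon> * \<omega> \<noteq> \<epsilon> * \<omega> * \<omega>"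
    using omega_facts e0 by (auto simp: mult.assoc)
  have sA: "mlt nA \<epsilon> + mlt nA (\<epsilon> * \<omega>) + mlt nA (\<epsilon> * \<omega> * \<omega>) = d"
    using group_sum[of VA nA] VA jnf_sum[OF jA Ac] dist unfolding VA_def by simp
  have dB: "det B = c ^ mlt nB c * (-c) ^ mlt nB (-c)"
    using jnf_det[OF Bc jB] group_prod[of "{c,-c}" nB] VB cne by simp
  have dA: "det A = \<epsilon> ^ mlt nA \<epsilon> * (\<epsilon> * \<omega>) ^ mlt nA (\<epsilon> * \<omega>) * (\<epsilon> * \<omega> * \<omega>) ^ mlt nA (\<epsilon> * \<omega> * \<omega>)"
    using jnf_det[OF Ac jA] group_prod[of VA nA] VA dist unfolding VA_def by (simp add: mult.assoc)
  have noint: "mlt nB x + mlt nA y \<le> d" if x: "x \<in> {c, -c}" and y: "y \<in> VA" for x y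
  proof (rule ccontr)
    assume "\<not> mlt nB x + mlt nA y \<le> d"
    then have "kernel_dim (char_matrix B x) + kernel_dim (char_matrix A y) > d"
      using kB[OF x] kA[OF y] by simp
    from kernel_inter[OF char_matrix_closed[OF Bc] char_matrix_closed[OF Ac] this]
    obtain v where v: "v \<in> carrier_vec d" "v \<noteq> 0\<^sub>v d" "char_matrix B x *\<^sub>v v = 0\<^sub>v d"
      "char_matrix A y *\<^sub>v v = 0\<^sub>v d" by blast
    have "\<rho> Sg *\<^sub>v v = x \<cdot>\<^sub>v v" using cm_eig[OF Bc v(1) v(3)] unfolding B_def .
    moreover have "\<rho> Rg *\<^sub>v v = y \<cdot>\<^sub>v v" using cm_eig[OF Ac v(1) v(4)] unfolding A_def .
    ultimately show False using no_common[OF irr d2 v(1) v(2)] by blast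
  qed
  have yVA: "\<epsilon> \<in> VA" "\<epsilon> * \<omega> \<in> VA" "\<epsilon> * \<omega> * \<omega> \<in> VA" unfolding VA_def by auto
  have xVB: "c \<in> {c,-c}" "-c \<in> {c,-c}" by auto
  show ?thesis
  proof (intro conjI impI)
    assume d3: "d = 3"
    have "mlt nA \<epsilon> \<le> 1 \<and> mlt nA (\<epsilon> * \<omega>) \<le> 1 \<and> mlt nA (\<epsilon> * \<omega> * \<omega>) \<le> 1"
      using noint[OF xVB(1) yVA(1)] noint[OF xVB(1) yVA(2)] noint[OF xVB(1) yVA(3)]
        noint[OF xVB(2) yVA(1)] noint[OF xVB(2) yVA(2)] noint[OF xVB(2) yVA(3)] sB d3 by linarith
    then have m: "mlt nA \<epsilon> = 1" "mlt nA (\<epsilon> * \<omega>) = 1" "mlt nA (\<epsilon> * \<omega> * \<omega>) = 1" using sA d3 by linarith+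
    have "det A = \<epsilon> ^ 3 * \<omega> ^ 3" unfolding dA m by (simp add: power3_eq_cube algebra_simps)
    then show "det (\<rho> Rg) = \<epsilon>" unfolding A_def using omega_facts(2) e3 by simp
  next
    assume d4: "d = 4"
    have "mlt nB c \<le> 2 \<and> mlt nB (-c) \<le> 2"
      using noint[OF xVB(1) yVA(1)] noint[OF xVB(1) yVA(2)] noint[OF xVB(1) yVA(3)]
        noint[OF xVB(2) yVA(1)] noint[OF xVB(2) yVA(2)] noint[OF xVB(2) yVA(3)] sA d4 by linarith
    then have m: "mlt nB c = 2" "mlt nB (-c) = 2" using sB d4 by linarith+
    have "det B = (c * c) * (c * c)" unfolding dB m by (simp add: power2_eq_square)
    then show "det (\<rho> Sg) = 1" unfolding B_def using cc e2 by simp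
  qed
qed


lemma e_sum: "(\<Prod>i<(d::nat). e (r i)) = e (\<Sum>i<d. r i)"
  unfolding e_def of_real_sum sum_distrib_left by (subst exp_sum) simp_all

lemma e_pow: "e x ^ k = e (real k * x)"
  unfolding e_def by (simp add: exp_of_nat_mult[symmetric] algebra_simps)

lemma e_one: assumes "e y = 1" shows "\<exists>n::int. y = of_int n"
proof -
  have "Re (e y) = cos (2 * pi * y)" unfolding e_def by (simp add: Re_exp)
  then have "cos (2 * pi * y) = 1" using assms by simp
  then obtain n :: int where "2 * pi * y = real_of_int n * 2 * pi" using cos_one_2pi_int by blast
  then have "y = of_int n" by simp
  then show ?thesis by blast
qed

lemma det_T_e:
  assumes M: "M \<in> carrier_mat d d" and cp: "char_poly M = (\<Prod>i<d. [:- e (r i), 1:])"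
  shows "det M = e (\<Sum>i<d. r i)"
proof -
  have "det M = (-1)^d * poly (char_poly M) 0" by (rule det_charpoly0[OF M])
  also have "poly (char_poly M) 0 = (\<Prod>i<d. - e (r i))" unfolding cp by (simp add: poly_prod)
  also have "(\<Prod>i<d. - e (r i)) = (\<Prod>i<d. (-1) * e (r i))" by simp
  also have "\<dots> = (\<Prod>i<d. (-1::complex)) * (\<Prod>i<d. e (r i))" by (rule prod.distrib)
  also have "(\<Prod>i<d. (-1::complex)) = (-1)^d" by simp
  finally have "det M = ((-1)^d * (-1)^d) * (\<Prod>i<d. e (r i))" by (simp only: mult.assoc)
  also have "(-1::complex)^d * (-1)^d = 1" by (simp flip: power_add)
  finally show ?thesis using e_sum by simp
qed

theorem lemma4p1:
  fixes d :: nat and \<rho> :: "int mat \<Rightarrow> complex mat" and r :: "nat \<Rightarrow> real"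
  assumes "irreducible_rep d \<rho>"
    and "d \<le> 4"
    and "char_poly (\<rho> T_mat) = (\<Prod>i<d. [:- e (r i), 1:])"
  shows "\<exists>n::int. 12 * (\<Sum>i<d. r i) = of_int n \<and> int d dvd n"
proof -
  note irr = assms(1)
  have r: "is_rep d \<rho>" and dpos: "d > 0" using irr unfolding irreducible_rep_def by auto
  obtain \<epsilon> where eps: "\<epsilon> = 1 \<or> \<epsilon> = -1" and Z: "\<rho> Ng = \<epsilon> \<cdot>\<^sub>m 1\<^sub>m d" using schur_Z[OF irr] by blast
  define B where "B = \<rho> Sg"
  define A where "A = \<rho> Rg"
  have Bc: "B \<in> carrier_mat d d" unfolding B_def using rep_carrier[OF r] SL_facts by auto
  have Ac: "A \<in> carrier_mat d d" unfolding A_def using rep_carrier[OF r] SL_facts by auto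
  have SS: "Sg * Sg \<in> SL2Z" "Rg * Rg \<in> SL2Z" "Sg * Sg * Sg \<in> SL2Z"
    using SL_facts SL2Z_mult by blast+
  have BB: "B * B = \<epsilon> \<cdot>\<^sub>m 1\<^sub>m d"
    unfolding B_def using rep_mult[OF r SL_facts(1) SL_facts(1)] rel_facts(1) Z by simp
  have AAA: "A * A * A = \<epsilon> \<cdot>\<^sub>m 1\<^sub>m d"
  proof -
    have "\<rho> (Rg * Rg * Rg) = \<rho> (Rg * Rg) * A" unfolding A_def by (rule rep_mult[OF r SS(2) SL_facts(2)])
    also have "\<rho> (Rg * Rg) = A * A" unfolding A_def by (rule rep_mult[OF r SL_facts(2) SL_facts(2)])
    finally show ?thesis using rel_facts(2) Z by simp
  qed
  have T: "\<rho> T_mat = B * B * B * A"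
  proof -
    have "\<rho> (Sg * Sg * Sg * Rg) = \<rho> (Sg * Sg * Sg) * A" unfolding A_def by (rule rep_mult[OF r SS(3) SL_facts(2)])
    also have "\<rho> (Sg * Sg * Sg) = \<rho> (Sg * Sg) * B" unfolding B_def by (rule rep_mult[OF r SS(1) SL_facts(1)])
    also have "\<rho> (Sg * Sg) = B * B" unfolding B_def by (rule rep_mult[OF r SL_facts(1) SL_facts(1)])
    finally show ?thesis using rel_facts(5) by simp
  qed
  have e2: "\<epsilon> * \<epsilon> = 1" using eps by auto
  have e2p: "\<epsilon> ^ 2 = 1" using e2 by (simp add: power2_eq_square)
  have dsm: "det (\<epsilon> \<cdot>\<^sub>m 1\<^sub>m d) = \<epsilon> ^ d" by simp
  have detB2: "det B ^ 2 = \<epsilon> ^ d"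
    using det_mult[OF Bc Bc] BB dsm by (simp add: power2_eq_square)
  have detA3: "det A ^ 3 = \<epsilon> ^ d"
    using det_mult[OF mult_carrier_mat[OF Ac Ac] Ac] det_mult[OF Ac Ac] AAA dsm by (simp add: power3_eq_cube)
  have detT: "det (\<rho> T_mat) = det B ^ 3 * det A"
    using det_mult[OF mult_carrier_mat[OF mult_carrier_mat[OF Bc Bc] Bc] Ac]
      det_mult[OF mult_carrier_mat[OF Bc Bc] Bc] det_mult[OF Bc Bc] T by (simp add: power3_eq_cube)
  define D where "D = det (\<rho> T_mat)"
  have DE: "D = e (\<Sum>i<d. r i)" unfolding D_def
    by (rule det_T_e[OF rep_carrier[OF r SL_facts(5)] assms(3)])
  have EA: "(d = 3 \<longrightarrow> det A = \<epsilon>) \<and> (d = 4 \<longrightarrow> det B = 1)" if "d \<ge> 2"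
    using eigen_analysis[OF irr that eps] BB AAA unfolding A_def B_def by blast
  have key: "D ^ (12 div d) = 1"
  proof -
    have "d = 1 \<or> d = 2 \<or> d = 3 \<or> d = 4" using dpos assms(2) by auto
    then show ?thesis
    proof (elim disjE)
      assume d1: "d = 1"
      have "D ^ 12 = (det B ^ 2) ^ 18 * (det A ^ 3) ^ 4" unfolding D_def detT by (simp add: power_mult_distrib flip: power_mult)
      also have "\<dots> = (\<epsilon> ^ 2) ^ 11" unfolding detB2 detA3 d1 by (simp flip: power_mult power_add)
      finally show ?thesis using d1 e2p by simp
    next
      assume d2: "d = 2"
      have "D ^ 6 = (det B ^ 2) ^ 9 * (det A ^ 3) ^ 2" unfolding D_def detT by (simp add: power_mult_distrib flip: power_mult)
      also have "\<dots> = (\<epsilon> ^ 2) ^ 11" unfolding detB2 detA3 d2 by (simp flip: power_mult power_add)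
      finally show ?thesis using d2 e2p by simp
    next
      assume d3: "d = 3"
      have dA: "det A = \<epsilon>" using EA d3 by simp
      have "D ^ 4 = (det B ^ 2) ^ 6 * det A ^ 4" unfolding D_def detT by (simp add: power_mult_distrib flip: power_mult)
      also have "\<dots> = (\<epsilon> ^ 2) ^ 11" unfolding detB2 dA d3 by (simp flip: power_mult power_add)
      finally show ?thesis using d3 e2p by simp
    next
      assume d4: "d = 4"
      have dB: "det B = 1" using EA d4 by simp
      have "D ^ 3 = det B ^ 9 * det A ^ 3" unfolding D_def detT by (simp add: power_mult_distrib flip: power_mult)
      also have "\<dots> = (\<epsilon> ^ 2) ^ 2" unfolding dB detA3 d4 by (simp flip: power_mult)
      finally show ?thesis using d4 e2p by simp
    qed
  qed
  have "e (real (12 div d) * (\<Sum>i<d. r i)) = 1" using key DE e_pow by simp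
  then obtain n :: int where n: "real (12 div d) * (\<Sum>i<d. r i) = of_int n" using e_one by blast
  have dk: "real d * real (12 div d) = 12"
  proof -
    have "d = 1 \<or> d = 2 \<or> d = 3 \<or> d = 4" using dpos assms(2) by auto
    then show ?thesis by auto
  qed
  have "12 * (\<Sum>i<d. r i) = real d * (real (12 div d) * (\<Sum>i<d. r i))" using dk by (simp add: mult.assoc[symmetric])
  also have "\<dots> = of_int (int d * n)" using n by simp
  finally show ?thesis by (intro exI[of _ "int d * n"]) simp
qed


end
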